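(* Let $M$ be a matroid on $E=\{1,\dots,n\}$ such that $E$ admits a good partition $(E_1,E_2)$ with respect to $M$, and let $M'$ be a relaxation of $M$. Then $P(M')$ has a nontrivial hyperplane split.
   Context: A relaxation of $M$ is the matroid $M'$ on $E$ with $\mathcal{B}(M')=\mathcal{B}(M)\cup\{X\}$, where $X\subseteq E$ is a set that is both a circuit and a hyperplane (closed set of rank $r-1$) of $M$, $r$ the rank of $M$. For a matroid $N$ on $E$, $P(N)=\mathrm{conv}\{\sum_{i\in B}e_i : B\in\mathcal{B}(N)\}\subset\mathbb{R}^n$. A hyperplane split of $P(N)$ is an expression $P(N)=P(N_1)\cup P(N_2)$ with $N_1,N_2$ matroids on $E$ such that $P(N_1)\cap P(N_2)$ is a face of both; it is nontrivial if $P(N_1)\neq P(N)\neq P(N_2)$. For $A\subseteq E$, $M|_A$ is the restriction, $\mathcal{I}(\cdot)$ the independent sets. A partition $(E_1,E_2)$ of $E$ with $r_i$ the rank of $M|_{E_i}$ and $r_i>1$ is a good partition if there exist integers $0<a_1<r_1$, $0<a_2<r_2$ with (P1) $r_1+r_2=r+a_1+a_2$ and (P2) for every $X\in\mathcal{I}(M|_{E_1})$ with $|X|\le r_1-a_1$ and every $Y\in\mathcal{I}(M|_{E_2})$ with $|Y|\le r_2-a_2$, $X\cup Y\in\mathcal{I}(M)$. *)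

theory Defs
  imports "HOL-Analysis.Analysis"
begin

text \<open>A matroid on the ground set E is represented by its family of bases.\<close>
definition matroid_bases :: "'a set \<Rightarrow> 'a set set \<Rightarrow> bool" where
  "matroid_bases E \<B> \<longleftrightarrow> finite E \<and> \<B> \<noteq> {} \<and> (\<forall>b\<in>\<B>. b \<subseteq> E) \<and>
     (\<forall>B1\<in>\<B>. \<forall>B2\<in>\<B>. \<forall>x\<in>B1 - B2. \<exists>y\<in>B2 - B1. insert y (B1 - {x}) \<in> \<B>)"

definition m_indep :: "'a set set \<Rightarrow> 'a set \<Rightarrow> bool" where
  "m_indep \<B> I \<longleftrightarrow> (\<exists>b\<in>\<B>. I \<subseteq> b)"

definition m_rank :: "'a set set \<Rightarrow> 'a set \<Rightarrow> nat" where
  "m_rank \<B> A = Max {card I | I. m_indep \<B> I \<and> I \<subseteq> A}"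

definition m_circuit :: "'a set \<Rightarrow> 'a set set \<Rightarrow> 'a set \<Rightarrow> bool" where
  "m_circuit E \<B> C \<longleftrightarrow> C \<subseteq> E \<and> \<not> m_indep \<B> C \<and> (\<forall>D. D \<subset> C \<longrightarrow> m_indep \<B> D)"

definition m_closure :: "'a set \<Rightarrow> 'a set set \<Rightarrow> 'a set \<Rightarrow> 'a set" where
  "m_closure E \<B> F = {e\<in>E. m_rank \<B> (insert e F) = m_rank \<B> F}"

definition m_hyperplane :: "'a set \<Rightarrow> 'a set set \<Rightarrow> 'a set \<Rightarrow> bool" where
  "m_hyperplane E \<B> F \<longleftrightarrow> F \<subseteq> E \<and> m_closure E \<B> F = F \<and> m_rank \<B> F = m_rank \<B> E - 1"

definition is_relaxation :: "'a set \<Rightarrow> 'a set set \<Rightarrow> 'a set set \<Rightarrow> bool" where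
  "is_relaxation E \<B> \<B>' \<longleftrightarrow> (\<exists>X. m_circuit E \<B> X \<and> m_hyperplane E \<B> X \<and> \<B>' = \<B> \<union> {X})"

definition restr_indep :: "'a set set \<Rightarrow> 'a set \<Rightarrow> 'a set \<Rightarrow> bool" where
  "restr_indep \<B> A I \<longleftrightarrow> m_indep \<B> I \<and> I \<subseteq> A"

definition good_partition :: "'a set \<Rightarrow> 'a set set \<Rightarrow> 'a set \<Rightarrow> 'a set \<Rightarrow> bool" where
  "good_partition E \<B> E1 E2 \<longleftrightarrow>
     E1 \<union> E2 = E \<and> E1 \<inter> E2 = {} \<and>
     m_rank \<B> E1 > 1 \<and> m_rank \<B> E2 > 1 \<and>
     (\<exists>a1 a2::nat. 0 < a1 \<and> a1 < m_rank \<B> E1 \<and> 0 < a2 \<and> a2 < m_rank \<B> E2 \<and>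
        m_rank \<B> E1 + m_rank \<B> E2 = m_rank \<B> E + a1 + a2 \<and>
        (\<forall>X Y. restr_indep \<B> E1 X \<and> card X \<le> m_rank \<B> E1 - a1 \<and>
               restr_indep \<B> E2 Y \<and> card Y \<le> m_rank \<B> E2 - a2 \<longrightarrow> m_indep \<B> (X \<union> Y)))"

text \<open>Matroid base polytope, ground set = the finite type 'n, ambient space real^'n.\<close>
definition indic_vec :: "'n::finite set \<Rightarrow> real^'n" where
  "indic_vec B = (\<chi> i. if i \<in> B then 1 else 0)"

definition base_polytope :: "'n::finite set set \<Rightarrow> (real^'n) set" where
  "base_polytope \<B> = convex hull (indic_vec ` \<B>)"

definition hyperplane_split :: "'n::finite set set \<Rightarrow> 'n set set \<Rightarrow> 'n set set \<Rightarrow> bool" where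
  "hyperplane_split \<B> \<B>1 \<B>2 \<longleftrightarrow>
     matroid_bases UNIV \<B>1 \<and> matroid_bases UNIV \<B>2 \<and>
     base_polytope \<B> = base_polytope \<B>1 \<union> base_polytope \<B>2 \<and>
     (base_polytope \<B>1 \<inter> base_polytope \<B>2) face_of base_polytope \<B>1 \<and>
     (base_polytope \<B>1 \<inter> base_polytope \<B>2) face_of base_polytope \<B>2"

definition has_nontrivial_hyperplane_split :: "'n::finite set set \<Rightarrow> bool" where
  "has_nontrivial_hyperplane_split \<B> \<longleftrightarrow>
     (\<exists>\<B>1 \<B>2. hyperplane_split \<B> \<B>1 \<B>2 \<and>
        base_polytope \<B>1 \<noteq> base_polytope \<B> \<and> base_polytope \<B>2 \<noteq> base_polytope \<B>)"

end

theory Submission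
  imports Defs
begin


lemma bases_card_eq_aux:
  fixes Bs :: "'n::finite set set"
  assumes M: "matroid_bases UNIV Bs" and B2: "B2 \<in> Bs"
  shows "\<And>B1. B1 \<in> Bs \<Longrightarrow> card (B1 - B2) = n \<Longrightarrow> card B1 = card B2"
proof (induction n)
  case 0
  then have "B1 \<subseteq> B2" by auto
  moreover have "B2 \<subseteq> B1"
  proof
    fix x assume "x \<in> B2"
    show "x \<in> B1"
    proof (rule ccontr)
      assume "x \<notin> B1"
      then obtain y where "y \<in> B1 - B2" using M B2 0 \<open>x \<in> B2\<close> unfolding matroid_bases_def by blast
      then show False using \<open>B1 \<subseteq> B2\<close> by auto
    qed
  qed
  ultimately show ?case by simp
next
  case (Suc n)
  then obtain x where x: "x \<in> B1 - B2" by (metis card.empty ex_in_conv nat.distinct(1))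
  then obtain y where y: "y \<in> B2 - B1" and C: "insert y (B1 - {x}) \<in> Bs"
    using M B2 Suc.prems unfolding matroid_bases_def by blast
  have "insert y (B1 - {x}) - B2 = (B1 - B2) - {x}" using y by auto
  then have "card (insert y (B1 - {x}) - B2) = n" using x Suc.prems by simp
  then have "card (insert y (B1 - {x})) = card B2" using Suc.IH C by blast
  moreover have "card (insert y (B1 - {x})) = card B1" using x y
    by (simp add: card_insert_if) (metis Diff_iff card_Diff1_less card_gt_0_iff finite ex_in_conv Suc_pred empty_iff)
  ultimately show ?case by simp
qed

lemma bases_card_eq:
  fixes Bs :: "'n::finite set set"
  assumes "matroid_bases UNIV Bs" "B1 \<in> Bs" "B2 \<in> Bs"
  shows "card B1 = card B2"
  using bases_card_eq_aux[OF assms(1,3) assms(2)] by blast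

lemma card_diff_sym:
  assumes "finite A" "finite C" "card A = card C"
  shows "card (A - C) = card (C - A)"
  using assms by (simp add: card_Diff_subset_Int Int_commute)

lemma augment:
  fixes Bs :: "'n::finite set set"
  assumes M: "matroid_bases UNIV Bs" and I: "m_indep Bs I" and J: "m_indep Bs J"
    and lt: "card I < card J"
  shows "\<exists>e\<in>J - I. m_indep Bs (insert e I)"
proof (rule ccontr)
  assume no: "\<not> ?thesis"
  define P where "P = (\<lambda>p. fst p \<in> Bs \<and> I \<subseteq> fst p \<and> snd p \<in> Bs \<and> J \<subseteq> snd p)"
  define f where "f = (\<lambda>p::'n set \<times> 'n set. card (fst p - snd p))"
  obtain BI BJ where "BI \<in> Bs" "I \<subseteq> BI" "BJ \<in> Bs" "J \<subseteq> BJ" using I J unfolding m_indep_def by blast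
  then have "P (BI, BJ)" unfolding P_def by simp
  define p where "p = arg_min f P"
  have Pp: "P p" unfolding p_def by (rule arg_min_natI) fact
  have minp: "\<And>q. P q \<Longrightarrow> f p \<le> f q" unfolding p_def by (rule arg_min_nat_le)
  obtain B B' where p: "p = (B, B')" by (cases p)
  have B: "B \<in> Bs" "I \<subseteq> B" and B': "B' \<in> Bs" "J \<subseteq> B'" using Pp p unfolding P_def by auto
  have a: "B - I \<subseteq> B'"
  proof
    fix x assume x: "x \<in> B - I"
    show "x \<in> B'"
    proof (rule ccontr)
      assume "x \<notin> B'"
      then obtain y where y: "y \<in> B' - B" and C: "insert y (B - {x}) \<in> Bs"
        using M B B' x unfolding matroid_bases_def by blast
      have "P (insert y (B - {x}), B')" using C B B' x unfolding P_def by auto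
      then have "f p \<le> card (insert y (B - {x}) - B')" using minp unfolding f_def by fastforce
      moreover have "insert y (B - {x}) - B' = (B - B') - {x}" using y by auto
      moreover have "card ((B - B') - {x}) < card (B - B')" using x \<open>x \<notin> B'\<close>
        by (intro card_Diff1_less) auto
      ultimately show False unfolding f_def p by simp
    qed
  qed
  have b: "B' - J \<subseteq> B"
  proof
    fix x assume x: "x \<in> B' - J"
    show "x \<in> B"
    proof (rule ccontr)
      assume "x \<notin> B"
      then obtain y where y: "y \<in> B - B'" and C: "insert y (B' - {x}) \<in> Bs"
        using M B B' x unfolding matroid_bases_def by blast
      have "P (B, insert y (B' - {x}))" using C B B' x unfolding P_def by auto
      then have "f p \<le> card (B - insert y (B' - {x}))" using minp unfolding f_def by fastforce
      moreover have "B - insert y (B' - {x}) = (B - B') - {y}" using y \<open>x \<notin> B\<close> by auto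
      moreover have "card ((B - B') - {y}) < card (B - B')" using y
        by (intro card_Diff1_less) auto
      ultimately show False unfolding f_def p by simp
    qed
  qed
  have c: "B \<inter> J \<subseteq> I"
  proof
    fix e assume e: "e \<in> B \<inter> J"
    show "e \<in> I"
    proof (rule ccontr)
      assume "e \<notin> I"
      moreover have "m_indep Bs (insert e I)" using e B unfolding m_indep_def by blast
      ultimately show False using no e by blast
    qed
  qed
  have eq1: "B' - B = J - I" using b c B' B by auto
  have sub2: "B - B' \<subseteq> I - J" using a B' by auto
  have "card (B - B') = card (B' - B)"
    using bases_card_eq[OF M B(1) B'(1)] by (intro card_diff_sym) auto
  moreover have "card (B - B') \<le> card (I - J)" using sub2 by (simp add: card_mono)
  moreover have "card (I - J) < card (J - I)"
  proof -
    have "card (I \<inter> J) \<le> card I" by (simp add: card_mono)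
    then show ?thesis using lt by (simp add: card_Diff_subset_Int Int_commute)
  qed
  ultimately show False using eq1 by simp
qed



lemma base_indep: "B \<in> Bs \<Longrightarrow> m_indep Bs B"
  unfolding m_indep_def by blast

lemma indep_subset: "m_indep Bs I \<Longrightarrow> J \<subseteq> I \<Longrightarrow> m_indep Bs J"
  unfolding m_indep_def by blast

lemma indep_card_le:
  fixes Bs :: "'n::finite set set"
  assumes M: "matroid_bases UNIV Bs" and "m_indep Bs I" and "B \<in> Bs"
  shows "card I \<le> card B"
proof -
  obtain B0 where "B0 \<in> Bs" "I \<subseteq> B0" using assms unfolding m_indep_def by blast
  then show ?thesis using bases_card_eq[OF M \<open>B0 \<in> Bs\<close> assms(3)] by (metis card_mono finite)
qed

lemma indep_card_base:
  fixes Bs :: "'n::finite set set"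
  assumes M: "matroid_bases UNIV Bs" and "m_indep Bs I" and "B \<in> Bs" and "card I = card B"
  shows "I \<in> Bs"
proof -
  obtain B0 where "B0 \<in> Bs" "I \<subseteq> B0" using assms unfolding m_indep_def by blast
  then have "I = B0" using bases_card_eq[OF M \<open>B0 \<in> Bs\<close> assms(3)] assms(4)
    by (metis card_subset_eq finite)
  then show ?thesis using \<open>B0 \<in> Bs\<close> by simp
qed

lemma augment_to:
  fixes Bs :: "'n::finite set set"
  assumes M: "matroid_bases UNIV Bs" and I: "m_indep Bs I" and J: "m_indep Bs J"
  shows "card I \<le> m \<Longrightarrow> m \<le> card J \<Longrightarrow> \<exists>T. T \<subseteq> J - I \<and> card T = m - card I \<and> m_indep Bs (I \<union> T)"
proof (induction m)
  case 0
  then show ?case using I by auto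
next
  case (Suc m)
  show ?case
  proof (cases "card I = Suc m")
    case True
    then show ?thesis using I by (intro exI[of _ "{}"]) auto
  next
    case False
    then have "card I \<le> m" "m \<le> card J" using Suc.prems by auto
    then obtain T where T: "T \<subseteq> J - I" "card T = m - card I" "m_indep Bs (I \<union> T)" using Suc.IH by blast
    have cIT: "card (I \<union> T) = m" using T \<open>card I \<le> m\<close>
      by (subst card_Un_disjoint) auto
    then have "card (I \<union> T) < card J" using Suc.prems by simp
    then obtain e where e: "e \<in> J - (I \<union> T)" "m_indep Bs (insert e (I \<union> T))"
      using augment[OF M T(3) J] by blast
    have "card (insert e T) = Suc (card T)" using e by (simp add: card_insert_if)
    then show ?thesis using e T \<open>card I \<le> m\<close> False Suc.prems
      by (intro exI[of _ "insert e T"]) auto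
  qed
qed

lemma extend_within:
  fixes Bs :: "'n::finite set set"
  assumes M: "matroid_bases UNIV Bs" and I: "m_indep Bs I" and "I \<subseteq> Z"
    and D0: "D0 \<in> Bs" "D0 \<subseteq> Z"
  shows "\<exists>D\<in>Bs. I \<subseteq> D \<and> D \<subseteq> Z"
proof -
  have le: "card I \<le> card D0" using indep_card_le[OF M I D0(1)] .
  obtain T where T: "T \<subseteq> D0 - I" "card T = card D0 - card I" "m_indep Bs (I \<union> T)"
    using augment_to[OF M I base_indep[OF D0(1)] le] by blast
  have "card (I \<union> T) = card D0" using T le by (subst card_Un_disjoint) auto
  then have "I \<union> T \<in> Bs" using indep_card_base[OF M T(3) D0(1)] by simp
  then show ?thesis using T assms by (intro bexI[of _ "I \<union> T"]) auto
qed

lemma rank_set_finite: "finite {card I |I. m_indep Bs I \<and> I \<subseteq> (A::'n::finite set)}"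
proof -
  have "{card I |I. m_indep Bs I \<and> I \<subseteq> A} = card ` {I. m_indep Bs I \<and> I \<subseteq> A}" by auto
  then show ?thesis by simp
qed

lemma rank_set_ne: "matroid_bases UNIV Bs \<Longrightarrow> {card I |I. m_indep Bs I \<and> I \<subseteq> A} \<noteq> {}"
  unfolding matroid_bases_def m_indep_def by auto

lemma rank_attained:
  fixes Bs :: "'n::finite set set"
  assumes M: "matroid_bases UNIV Bs"
  shows "\<exists>I. m_indep Bs I \<and> I \<subseteq> A \<and> card I = m_rank Bs A"
proof -
  have "m_rank Bs A \<in> {card I |I. m_indep Bs I \<and> I \<subseteq> A}"
    unfolding m_rank_def using rank_set_finite rank_set_ne[OF M] by (rule Max_in)
  then show ?thesis by auto
qed

lemma rank_ge:
  fixes Bs :: "'n::finite set set"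
  assumes "m_indep Bs I" "I \<subseteq> A"
  shows "card I \<le> m_rank Bs A"
  unfolding m_rank_def using rank_set_finite assms by (intro Max_ge) auto

lemma rank_UNIV:
  fixes Bs :: "'n::finite set set"
  assumes M: "matroid_bases UNIV Bs" and B: "B \<in> Bs"
  shows "m_rank Bs UNIV = card B"
proof -
  obtain I where "m_indep Bs I" "card I = m_rank Bs UNIV" using rank_attained[OF M] by blast
  then have "m_rank Bs UNIV \<le> card B" using indep_card_le[OF M _ B] by metis
  moreover have "card B \<le> m_rank Bs UNIV" using rank_ge[OF base_indep[OF B]] by simp
  ultimately show ?thesis by simp
qed



lemma empty_indep: "matroid_bases UNIV Bs \<Longrightarrow> m_indep Bs {}"
  unfolding matroid_bases_def m_indep_def by auto

lemma circuit_card: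
  fixes Bs :: "'n::finite set set"
  assumes M: "matroid_bases UNIV Bs" and B0: "B0 \<in> Bs" and r: "0 < card B0"
    and C: "m_circuit UNIV Bs X" and H: "m_hyperplane UNIV Bs X"
  shows "card X = card B0"
proof -
  have nX: "\<not> m_indep Bs X" and prp: "\<And>D. D \<subset> X \<Longrightarrow> m_indep Bs D"
    using C unfolding m_circuit_def by auto
  have "X \<noteq> {}" using nX empty_indep[OF M] by auto
  then obtain x where x: "x \<in> X" by auto
  have "X - {x} \<subset> X" using x by auto
  then have "m_indep Bs (X - {x})" using prp by blast
  then have ge: "card X - 1 \<le> m_rank Bs X" using rank_ge[of Bs "X - {x}" X] x by auto
  obtain I where I: "m_indep Bs I" "I \<subseteq> X" "card I = m_rank Bs X" using rank_attained[OF M] by blast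
  have "I \<noteq> X" using I nX by auto
  then have "card I < card X" using I by (intro psubset_card_mono) auto
  then have "m_rank Bs X = card X - 1" using ge I by simp
  moreover have "m_rank Bs X = card B0 - 1" using H rank_UNIV[OF M B0] unfolding m_hyperplane_def by simp
  moreover have "card X > 0" using \<open>X \<noteq> {}\<close> by (simp add: card_gt_0_iff)
  ultimately show ?thesis using r by simp
qed

lemma hyperplane_extend:
  fixes Bs :: "'n::finite set set"
  assumes M: "matroid_bases UNIV Bs" and B0: "B0 \<in> Bs" and r: "0 < card B0"
    and C: "m_circuit UNIV Bs X" and H: "m_hyperplane UNIV Bs X" and w: "w \<notin> X"
  shows "\<exists>D\<in>Bs. D \<subseteq> insert w X"
proof -
  have cX: "card X = card B0" using circuit_card[OF assms(1-5)] .
  have rX: "m_rank Bs X = card B0 - 1" using H rank_UNIV[OF M B0] unfolding m_hyperplane_def by simp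
  have "m_closure UNIV Bs X = X" using H unfolding m_hyperplane_def by simp
  then have ne: "m_rank Bs (insert w X) \<noteq> m_rank Bs X" using w unfolding m_closure_def by blast
  obtain I where I: "m_indep Bs I" "I \<subseteq> X" "card I = m_rank Bs X" using rank_attained[OF M] by blast
  have "m_rank Bs X \<le> m_rank Bs (insert w X)" using rank_ge[OF I(1), of "insert w X"] I by auto
  then have ge: "card B0 \<le> m_rank Bs (insert w X)" using ne rX r by simp
  obtain J where J: "m_indep Bs J" "J \<subseteq> insert w X" "card J = m_rank Bs (insert w X)"
    using rank_attained[OF M] by blast
  have "card J \<le> card B0" using indep_card_le[OF M J(1) B0] .
  then have "card J = card B0" using ge J by simp
  then have "J \<in> Bs" using indep_card_base[OF M J(1) B0] by simp
  then show ?thesis using J by blast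
qed

lemma relax_matroid:
  fixes Bs :: "'n::finite set set"
  assumes M: "matroid_bases UNIV Bs" and B0: "B0 \<in> Bs" and r: "0 < card B0"
    and C: "m_circuit UNIV Bs X" and H: "m_hyperplane UNIV Bs X"
  shows "matroid_bases UNIV (Bs \<union> {X})"
proof -
  have cX: "card X = card B0" using circuit_card[OF assms] .
  have nX: "\<not> m_indep Bs X" and prp: "\<And>D. D \<subset> X \<Longrightarrow> m_indep Bs D"
    using C unfolding m_circuit_def by auto
  have XnB: "X \<notin> Bs" using nX base_indep by blast
  have cB: "\<And>B. B \<in> Bs \<Longrightarrow> card B = card B0" using bases_card_eq[OF M _ B0] by blast
  have exch: "\<exists>y\<in>B2 - B1. insert y (B1 - {x}) \<in> Bs \<union> {X}"
    if B1: "B1 \<in> Bs \<union> {X}" and B2: "B2 \<in> Bs \<union> {X}" and x: "x \<in> B1 - B2" for B1 B2 x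
  proof (cases "B1 \<in> Bs")
    case True note B1b = True
    show ?thesis
    proof (cases "B2 \<in> Bs")
      case True
      then show ?thesis using M B1b x unfolding matroid_bases_def by blast
    next
      case False
      then have B2X: "B2 = X" using B2 by auto
      have xX: "x \<notin> X" using x B2X by auto
      have cB1: "card (B1 - {x}) = card B0 - 1" using cB[OF B1b] x by simp
      show ?thesis
      proof (cases "B1 - {x} \<subseteq> X")
        case True
        have "card (B1 - {x}) < card X" using cB1 cX r by simp
        then have "\<not> X \<subseteq> B1 - {x}" by (meson card_mono finite leD)
        then obtain y where y: "y \<in> X" "y \<notin> B1 - {x}" by auto
        have "insert y (B1 - {x}) \<subseteq> X" using True y by auto
        moreover have "card (insert y (B1 - {x})) = card X" using y cB1 cX r by simp
        ultimately have "insert y (B1 - {x}) = X" by (simp add: card_subset_eq)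
        moreover have "y \<in> B2 - B1" using y xX B2X by auto
        ultimately show ?thesis by auto
      next
        case False
        then obtain w where w: "w \<in> B1 - {x}" "w \<notin> X" by auto
        obtain D0 where D0: "D0 \<in> Bs" "D0 \<subseteq> insert w X" using hyperplane_extend[OF assms w(2)] by blast
        have "m_indep Bs (B1 - {x})" using B1b by (intro indep_subset[OF base_indep]) auto
        then obtain D where D: "D \<in> Bs" "B1 - {x} \<subseteq> D" "D \<subseteq> (B1 - {x}) \<union> X"
          using extend_within[OF M _ _ D0(1), of "B1 - {x}" "(B1 - {x}) \<union> X"] D0 w by blast
        have "card D = card (B1 - {x}) + 1" using cB[OF D(1)] cB1 r by simp
        then have "card (D - (B1 - {x})) = 1" using D(2) by (simp add: card_Diff_subset)
        then obtain y where yy: "D - (B1 - {x}) = {y}" by (meson card_1_singletonE)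
        then have "D = insert y (B1 - {x})" using D(2) by auto
        moreover have "y \<in> X" "y \<notin> B1 - {x}" using yy D(3) by auto
        moreover then have "y \<noteq> x" using xX by auto
        ultimately show ?thesis using D(1) B2X by auto
      qed
    qed
  next
    case False
    then have B1X: "B1 = X" using B1 by auto
    then have B2b: "B2 \<in> Bs" using B2 x by auto
    have "X - {x} \<subset> X" using x B1X by auto
    then have I: "m_indep Bs (X - {x})" using prp by blast
    have cI: "card (X - {x}) < card B2" using cX cB[OF B2b] x B1X r by simp
    obtain y where y: "y \<in> B2 - (X - {x})" "m_indep Bs (insert y (X - {x}))"
      using augment[OF M I base_indep[OF B2b] cI] by blast
    have "card (insert y (X - {x})) = card B2" using y cX cB[OF B2b] x B1X r by simp
    then have "insert y (X - {x}) \<in> Bs" using indep_card_base[OF M y(2) B2b] by simp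
    moreover have "y \<in> B2 - B1" using y x B1X by auto
    ultimately show ?thesis using B1X by auto
  qed
  show ?thesis using M exch unfolding matroid_bases_def by auto
qed

lemma relax_indep_small:
  fixes Bs :: "'n::finite set set"
  assumes M: "matroid_bases UNIV Bs" and B0: "B0 \<in> Bs" and r: "0 < card B0"
    and C: "m_circuit UNIV Bs X" and H: "m_hyperplane UNIV Bs X"
    and I: "m_indep (Bs \<union> {X}) I" and cI: "card I < card B0"
  shows "m_indep Bs I"
proof -
  have cX: "card X = card B0" using circuit_card[OF assms(1-5)] .
  obtain B where B: "B \<in> Bs \<union> {X}" "I \<subseteq> B" using I unfolding m_indep_def by blast
  show ?thesis
  proof (cases "B \<in> Bs")
    case True then show ?thesis using B unfolding m_indep_def by blast
  next
    case False
    then have "I \<subseteq> X" using B by auto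
    moreover have "I \<noteq> X" using cI cX by auto
    ultimately show ?thesis using C unfolding m_circuit_def by blast
  qed
qed



lemma exchange_layer:
  fixes Bs :: "'n::finite set set"
  assumes M: "matroid_bases UNIV Bs" and B0: "B0 \<in> Bs" and r: "k1 + k2 = card B0"
    and layer: "\<And>X0 Y0. m_indep Bs X0 \<Longrightarrow> X0 \<subseteq> E1 \<Longrightarrow> card X0 = k1 \<Longrightarrow>
               m_indep Bs Y0 \<Longrightarrow> Y0 \<subseteq> - E1 \<Longrightarrow> card Y0 = k2 \<Longrightarrow> X0 \<union> Y0 \<in> Bs"
    and B: "B \<in> Bs" and B': "B' \<in> Bs"
    and hi: "k1 < card (B \<inter> E1)" and lo: "card (B' \<inter> E1) < k1"
  shows "\<exists>T S. T \<subseteq> B - B' \<and> S \<subseteq> B' - B \<and> (B - T) \<union> S \<in> Bs \<and> (B' - S) \<union> T \<in> Bs \<and>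
     card (((B' - S) \<union> T) \<inter> E1) \<le> k1 \<and>
     card (((B - T) \<union> S) \<inter> E1) - k1 < card (B \<inter> E1) - k1"
proof -
  define X where "X = B \<inter> E1"
  define Y where "Y = B - E1"
  define X' where "X' = B' \<inter> E1"
  define Y' where "Y' = B' - E1"
  have cB: "card B = card B0" "card B' = card B0" using bases_card_eq[OF M _ B0] B B' by auto
  have cXY: "card X + card Y = card B0" unfolding X_def Y_def using cB
    by (metis Diff_Diff_Int Int_commute card_Diff_subset_Int card_mono finite inf_le1 le_add_diff_inverse)
  have cXY': "card X' + card Y' = card B0" unfolding X'_def Y'_def using cB
    by (metis Diff_Diff_Int Int_commute card_Diff_subset_Int card_mono finite inf_le1 le_add_diff_inverse)
  have iB: "m_indep Bs B" "m_indep Bs B'" using B B' base_indep by auto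
  have iX: "m_indep Bs X" "m_indep Bs Y" "m_indep Bs X'" "m_indep Bs Y'"
    using iB unfolding X_def Y_def X'_def Y'_def by (auto intro: indep_subset)
  have hiX: "k1 < card X" and loX: "card X' < k1" using hi lo unfolding X_def X'_def by auto
  show ?thesis
  proof (cases "k1 - card X' \<le> card X - k1")
    case True
    obtain T where T: "T \<subseteq> X - X'" "card T = k1 - card X'" "m_indep Bs (X' \<union> T)"
      using augment_to[OF M iX(3) iX(1), of k1] hiX loX by auto
    have cT: "card T \<le> card X" using T(1) by (meson Diff_subset card_mono finite order_trans)
    have "T \<subseteq> X" using T(1) by auto
    then have cXT: "card (X - T) = card X - card T" by (simp add: card_Diff_subset)
    have "k1 \<le> card (X - T)" using cXT T(2) True hiX by linarith
    then obtain X1 where X1: "X1 \<subseteq> X - T" "card X1 = k1"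
      using obtain_subset_with_card_n by metis
    have "k2 \<le> card Y'" using cXY' r loX by linarith
    then obtain Y1 where Y1: "Y1 \<subseteq> Y'" "card Y1 = k2"
      using obtain_subset_with_card_n by metis
    have D0: "X1 \<union> Y1 \<in> Bs"
      using layer[of X1 Y1] X1 Y1 iX unfolding X_def Y'_def
      by (auto intro: indep_subset)
    have iBT: "m_indep Bs (B - T)" using iB by (auto intro: indep_subset)
    obtain D' where D': "D' \<in> Bs" "B - T \<subseteq> D'" "D' \<subseteq> (B - T) \<union> Y'"
      using extend_within[OF M iBT _ D0, of "(B - T) \<union> Y'"] X1 Y1 unfolding X_def by auto
    define S where "S = D' - (B - T)"
    have TX: "T \<subseteq> B \<inter> E1" "T \<inter> B' = {}" using T(1) unfolding X_def X'_def by auto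
    have SY: "S \<subseteq> Y' - B" using D' TX unfolding S_def Y'_def by auto
    have D'eq: "D' = (B - T) \<union> S" using D' unfolding S_def by auto
    have "T \<subseteq> B" using TX by auto
    then have cBT: "card (B - T) = card B0 - card T" using cB by (simp add: card_Diff_subset)
    have "card D' = card B0" using bases_card_eq[OF M D'(1) B0] .
    then have cS: "card S = card T" unfolding S_def using D'(2) cBT cT cXY
      by (simp add: card_Diff_subset)
    have "S \<subseteq> Y'" using SY by auto
    then have cS2: "card (Y' - S) = k2" using cS T(2) cXY' r loX
      by (simp add: card_Diff_subset)
    have cX'T: "card (X' \<union> T) = k1" using T loX
      by (subst card_Un_disjoint) auto
    have "(X' \<union> T) \<union> (Y' - S) \<in> Bs"
      using layer[OF T(3) _ cX'T _ _ cS2] iX(4) TX unfolding X'_def Y'_def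
      by (auto intro: indep_subset)
    moreover have "(X' \<union> T) \<union> (Y' - S) = (B' - S) \<union> T" using SY unfolding X'_def Y'_def by auto
    ultimately have D: "(B' - S) \<union> T \<in> Bs" by simp
    have cD: "((B' - S) \<union> T) \<inter> E1 = X' \<union> T" using SY TX unfolding X'_def Y'_def by auto
    have cD': "((B - T) \<union> S) \<inter> E1 = X - T" using SY TX unfolding X_def Y'_def by auto
    have "T \<noteq> {}" using T(2) loX by auto
    then have "card T > 0" by (simp add: card_gt_0_iff)
    then have "card (X - T) - k1 < card X - k1" using cXT hiX True T(2) by simp
    then show ?thesis using D D'(1) D'eq cD cD' cX'T TX SY unfolding X_def Y'_def
      by (intro exI[of _ T] exI[of _ S]) auto
  next
    case False
    have cY: "card Y \<le> k2" "k2 \<le> card Y'" using cXY cXY' r hiX loX by auto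
    obtain S where S: "S \<subseteq> Y' - Y" "card S = k2 - card Y" "m_indep Bs (Y \<union> S)"
      using augment_to[OF M iX(2) iX(4), of k2] cY by auto
    have cS: "card S = card X - k1" using S(2) cXY r hiX by simp
    have SB: "S \<subseteq> B' - B" "S \<inter> E1 = {}" using S(1) unfolding Y_def Y'_def by auto
    have "S \<subseteq> Y'" using S(1) by auto
    then have cYS: "card (Y' - S) = card Y' - card S" by (simp add: card_Diff_subset)
    have "k1 \<le> card X" using hiX by linarith
    then obtain X1 where X1: "X1 \<subseteq> X" "card X1 = k1"
      using obtain_subset_with_card_n by metis
    have "k2 \<le> card (Y' - S)" using cYS cS False cXY' cXY r hiX loX by linarith
    then obtain Y1 where Y1: "Y1 \<subseteq> Y' - S" "card Y1 = k2"
      using obtain_subset_with_card_n by metis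
    have D0: "X1 \<union> Y1 \<in> Bs"
      using layer[of X1 Y1] X1 Y1 iX unfolding X_def Y'_def
      by (auto intro: indep_subset)
    have iBS: "m_indep Bs (B' - S)" using iB by (auto intro: indep_subset)
    obtain D where D: "D \<in> Bs" "B' - S \<subseteq> D" "D \<subseteq> (B' - S) \<union> X"
      using extend_within[OF M iBS _ D0, of "(B' - S) \<union> X"] X1 Y1 unfolding Y'_def by auto
    define T where "T = D - (B' - S)"
    have TX: "T \<subseteq> X - B'" using D SB unfolding T_def X_def by auto
    have Deq: "D = (B' - S) \<union> T" using D unfolding T_def by auto
    have "S \<subseteq> B'" using SB by auto
    then have cBS: "card (B' - S) = card B0 - card S" using cB by (simp add: card_Diff_subset)
    have cSle: "card S \<le> card B0" using cS cXY by simp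
    have "card D = card B0" using bases_card_eq[OF M D(1) B0] .
    then have cT: "card T = card S" unfolding T_def using D(2) cBS cSle
      by (simp add: card_Diff_subset)
    have "T \<subseteq> X" using TX by auto
    then have cXT: "card (X - T) = k1" using cT cS hiX by (simp add: card_Diff_subset)
    have cYS2: "card (Y \<union> S) = k2" using S cY
      by (subst card_Un_disjoint) auto
    have "(X - T) \<union> (Y \<union> S) \<in> Bs"
      using layer[OF _ _ cXT S(3) _ cYS2] iX(1) SB unfolding X_def Y_def
      by (auto intro: indep_subset)
    moreover have "(X - T) \<union> (Y \<union> S) = (B - T) \<union> S" using TX unfolding X_def Y_def by auto
    ultimately have D': "(B - T) \<union> S \<in> Bs" by simp
    have cD: "((B' - S) \<union> T) \<inter> E1 = X' \<union> T" using SB TX unfolding X'_def X_def by auto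
    have cD': "((B - T) \<union> S) \<inter> E1 = X - T" using SB TX unfolding X_def by auto
    have "card (X' \<union> T) \<le> card X' + card T" by (rule card_Un_le)
    then have "card (X' \<union> T) \<le> k1" using cT cS False by simp
    moreover have "card (X - T) - k1 < card X - k1" using cXT hiX by simp
    ultimately show ?thesis using D(1) Deq D' cD cD' TX SB unfolding X_def
      by (intro exI[of _ T] exI[of _ S]) auto
  qed
qed



lemma indic_sum:
  assumes "T \<subseteq> B - B'" "S \<subseteq> B' - B"
  shows "indic_vec ((B - T) \<union> S) + indic_vec ((B' - S) \<union> T) = indic_vec B + indic_vec B'"
  using assms unfolding indic_vec_def by (auto simp: vec_eq_iff)

lemma lev_indic:
  "indic_vec E1 \<bullet> indic_vec (B::'n::finite set) = real (card (B \<inter> E1))"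
proof -
  have "indic_vec E1 \<bullet> indic_vec B = (\<Sum>i\<in>UNIV. if i \<in> B \<inter> E1 then 1 else (0::real))"
    unfolding indic_vec_def inner_vec_def by (intro sum.cong) auto
  also have "\<dots> = real (card (B \<inter> E1))"
    by (simp add: sum.If_cases Int_def)
  finally show ?thesis .
qed

lemma hull_exchange:
  fixes G :: "'a::real_vector set"
  assumes G: "finite G" and u: "\<forall>x\<in>G. 0 \<le> u x" "sum u G = 1"
    and abcd: "a \<in> G" "b \<in> G" "a \<noteq> b" "c \<in> G" "d \<in> G"
    and mu: "0 \<le> \<mu>" "\<mu> \<le> u a" "\<mu> \<le> u b"
  shows "(\<Sum>x\<in>G. u x *\<^sub>R x) - \<mu> *\<^sub>R (a + b) + \<mu> *\<^sub>R (c + d) \<in> convex hull G"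
proof -
  define w where "w = (\<lambda>x. u x - (if x = a then \<mu> else 0) - (if x = b then \<mu> else 0)
       + (if x = c then \<mu> else 0) + (if x = d then \<mu> else 0))"
  have w0: "\<forall>x\<in>G. 0 \<le> w x"
  proof
    fix x assume x: "x \<in> G"
    have "u x - (if x = a then \<mu> else 0) - (if x = b then \<mu> else 0) \<ge> 0"
      using u(1) x abcd(3) mu by auto
    then show "0 \<le> w x" unfolding w_def using mu by auto
  qed
  have sd: "\<And>e. e \<in> G \<Longrightarrow> (\<Sum>x\<in>G. (if x = e then \<mu> else 0)) = \<mu>"
    using G by simp
  have sdv: "\<And>e. e \<in> G \<Longrightarrow> (\<Sum>x\<in>G. (if x = e then \<mu> else 0) *\<^sub>R x) = \<mu> *\<^sub>R e"
  proof -
    fix e assume "e \<in> G"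
    have "(\<Sum>x\<in>G. (if x = e then \<mu> else 0) *\<^sub>R x) = (\<Sum>x\<in>G. if x = e then \<mu> *\<^sub>R e else 0)"
      by (intro sum.cong) auto
    then show "(\<Sum>x\<in>G. (if x = e then \<mu> else 0) *\<^sub>R x) = \<mu> *\<^sub>R e" using G \<open>e \<in> G\<close> by simp
  qed
  have "sum w G = 1"
    unfolding w_def using sd abcd u(2)
    by (simp add: sum.distrib sum_subtractf)
  moreover have "(\<Sum>x\<in>G. w x *\<^sub>R x) = (\<Sum>x\<in>G. u x *\<^sub>R x) - \<mu> *\<^sub>R (a + b) + \<mu> *\<^sub>R (c + d)"
    unfolding w_def using sdv abcd
    by (simp add: scaleR_add_left scaleR_diff_left sum.distrib sum_subtractf scaleR_add_right)
  ultimately show ?thesis unfolding convex_hull_finite[OF G] using w0 by blast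
qed



lemma core_split:
  fixes Bs :: "'n::finite set set"
  assumes M: "matroid_bases UNIV Bs" and B0: "B0 \<in> Bs" and r: "k1 + k2 = card B0"
    and layer: "\<And>X0 Y0. m_indep Bs X0 \<Longrightarrow> X0 \<subseteq> E1 \<Longrightarrow> card X0 = k1 \<Longrightarrow>
               m_indep Bs Y0 \<Longrightarrow> Y0 \<subseteq> - E1 \<Longrightarrow> card Y0 = k2 \<Longrightarrow> X0 \<union> Y0 \<in> Bs"
    and p: "p \<in> convex hull (indic_vec ` Bs)" and lev: "indic_vec E1 \<bullet> p \<le> real k1"
  shows "p \<in> convex hull (indic_vec ` {B\<in>Bs. card (B \<inter> E1) \<le> k1})"
proof -
  define g where "g = (\<lambda>B. (indic_vec B, real (card (B \<inter> E1) - k1)))"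
  define G where "G = g ` Bs"
  have finG: "finite G" unfolding G_def by simp
  define Q where "Q = convex hull G"
  have fG: "fst ` G = indic_vec ` Bs" unfolding G_def g_def by (simp add: image_image)
  have "fst ` Q = convex hull (indic_vec ` Bs)"
    unfolding Q_def using convex_hull_linear_image[OF linear_fst, of G] fG by simp
  then obtain q where q: "q \<in> Q" "fst q = p" using p by (metis imageE)
  define K where "K = Q \<inter> {x. fst x = p}"
  have "compact Q" unfolding Q_def using finG by (simp add: compact_convex_hull finite_imp_compact)
  moreover have "closed {x::(real^'n) \<times> real. fst x = p}"
    by (intro closed_Collect_eq continuous_intros)
  ultimately have cK: "compact K" unfolding K_def by (rule compact_Int_closed)
  have neK: "K \<noteq> {}" using q unfolding K_def by auto
  obtain q0 where q0: "q0 \<in> K" and minq: "\<And>y. y \<in> K \<Longrightarrow> snd q0 \<le> snd y"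
  proof -
    have "continuous_on K snd" by (intro continuous_intros)
    then show ?thesis using continuous_attains_inf[OF cK neK, of snd] that by blast
  qed
  have "q0 \<in> convex hull G" using q0 unfolding K_def Q_def by auto
  then obtain u where u: "\<forall>x\<in>G. 0 \<le> u x" "sum u G = 1" "(\<Sum>x\<in>G. u x *\<^sub>R x) = q0"
    unfolding convex_hull_finite[OF finG] by auto
  have fq0: "fst q0 = p" using q0 unfolding K_def by auto
  have levx: "\<And>B. indic_vec E1 \<bullet> fst (g B) = real (card (B \<inter> E1))"
    unfolding g_def by (simp add: lev_indic)
  have levp: "indic_vec E1 \<bullet> p = (\<Sum>x\<in>G. u x * (indic_vec E1 \<bullet> fst x))"
    using fq0 u(3) by (auto simp: fst_sum inner_sum_right)
  have key: "card (B \<inter> E1) \<le> k1" if B: "B \<in> Bs" and uB: "u (g B) > 0" for B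
  proof (rule ccontr)
    assume hi: "\<not> card (B \<inter> E1) \<le> k1"
    have "\<exists>B'\<in>Bs. u (g B') > 0 \<and> card (B' \<inter> E1) < k1"
    proof (rule ccontr)
      assume no: "\<not> ?thesis"
      have "(\<Sum>x\<in>G. u x * real k1) < (\<Sum>x\<in>G. u x * (indic_vec E1 \<bullet> fst x))"
      proof (rule sum_strict_mono_ex1[OF finG])
        show "\<forall>x\<in>G. u x * real k1 \<le> u x * (indic_vec E1 \<bullet> fst x)"
        proof
          fix x assume x: "x \<in> G"
          then obtain B' where B': "B' \<in> Bs" "x = g B'" unfolding G_def by auto
          show "u x * real k1 \<le> u x * (indic_vec E1 \<bullet> fst x)"
          proof (cases "u x > 0")
            case True
            then have "k1 \<le> card (B' \<inter> E1)" using no B' by force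
            then show ?thesis using True B' levx by (simp add: mult_left_mono)
          next
            case False
            then have "u x = 0" using u(1) x by force
            then show ?thesis by simp
          qed
        qed
        show "\<exists>a\<in>G. u a * real k1 < u a * (indic_vec E1 \<bullet> fst a)"
          using B uB hi levx unfolding G_def by (intro bexI[of _ "g B"]) auto
      qed
      moreover have "(\<Sum>x\<in>G. u x * real k1) = real k1" using u(2) by (simp add: sum_distrib_right[symmetric])
      ultimately show False using levp lev by simp
    qed
    then obtain B' where B': "B' \<in> Bs" "u (g B') > 0" "card (B' \<inter> E1) < k1" by blast
    have "\<exists>T S. T \<subseteq> B - B' \<and> S \<subseteq> B' - B \<and> (B - T) \<union> S \<in> Bs \<and> (B' - S) \<union> T \<in> Bs \<and>
     card (((B' - S) \<union> T) \<inter> E1) \<le> k1 \<and>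
     card (((B - T) \<union> S) \<inter> E1) - k1 < card (B \<inter> E1) - k1"
    proof (rule exchange_layer[OF M B0 r])
      show "\<And>X0 Y0. m_indep Bs X0 \<Longrightarrow> X0 \<subseteq> E1 \<Longrightarrow> card X0 = k1 \<Longrightarrow>
               m_indep Bs Y0 \<Longrightarrow> Y0 \<subseteq> - E1 \<Longrightarrow> card Y0 = k2 \<Longrightarrow> X0 \<union> Y0 \<in> Bs"
        by (rule layer)
    qed (use B B' hi in auto)
    then obtain T S where TS: "T \<subseteq> B - B'" "S \<subseteq> B' - B" "(B - T) \<union> S \<in> Bs" "(B' - S) \<union> T \<in> Bs"
       "card (((B' - S) \<union> T) \<inter> E1) \<le> k1"
       "card (((B - T) \<union> S) \<inter> E1) - k1 < card (B \<inter> E1) - k1"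
      by blast
    define D' where "D' = (B - T) \<union> S"
    define D where "D = (B' - S) \<union> T"
    define \<mu> where "\<mu> = min (u (g B)) (u (g B'))"
    have mu: "0 < \<mu>" "\<mu> \<le> u (g B)" "\<mu> \<le> u (g B')" unfolding \<mu>_def using uB B'(2) by auto
    have neq: "g B \<noteq> g B'" using hi B'(3) unfolding g_def by auto
    define q' where "q' = q0 - \<mu> *\<^sub>R (g B + g B') + \<mu> *\<^sub>R (g D' + g D)"
    have "q' \<in> convex hull G" unfolding q'_def u(3)[symmetric]
      by (rule hull_exchange[OF finG u(1,2)]) (use B B'(1) neq mu TS in \<open>auto simp: G_def D_def D'_def\<close>)
    moreover have "fst q' = p"
      using indic_sum[OF TS(1,2)] fq0 unfolding q'_def g_def D_def D'_def by (simp add: algebra_simps)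
    ultimately have "q' \<in> K" unfolding K_def Q_def by auto
    then have "snd q0 \<le> snd q'" by (rule minq)
    moreover have "snd (g D) = 0" using TS(5) unfolding g_def D_def by simp
    moreover have "snd (g B') = 0" using B'(3) unfolding g_def by simp
    moreover have "snd (g D') < snd (g B)" using TS(6) unfolding g_def D'_def by simp
    ultimately show False using mu(1) unfolding q'_def by (simp add: algebra_simps)
  qed
  obtain x0 where x0: "x0 \<in> G" "u x0 > 0"
  proof (rule ccontr)
    assume "\<not> thesis"
    then have "\<forall>x\<in>G. u x = 0" using u(1) that by force
    then show False using u(2) by simp
  qed
  define y where "y = (\<lambda>x. if u x > 0 then fst x else fst x0)"
  have "(\<Sum>x\<in>G. u x *\<^sub>R y x) \<in> convex hull (indic_vec ` {B\<in>Bs. card (B \<inter> E1) \<le> k1})"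
  proof (rule convex_sum[OF finG convex_convex_hull u(2)])
    show "\<And>i. i \<in> G \<Longrightarrow> 0 \<le> u i" using u(1) by auto
  next
    fix x assume x: "x \<in> G"
    have "fst z \<in> indic_vec ` {B\<in>Bs. card (B \<inter> E1) \<le> k1}" if zG: "z \<in> G" and uz: "u z > 0" for z
    proof -
      obtain B where "B \<in> Bs" "z = g B" using zG unfolding G_def by auto
      then show ?thesis using key[of B] uz unfolding g_def by auto
    qed
    then have "\<And>z. z \<in> G \<Longrightarrow> u z > 0 \<Longrightarrow> fst z \<in> convex hull (indic_vec ` {B\<in>Bs. card (B \<inter> E1) \<le> k1})"
      by (meson hull_inc)
    then show "y x \<in> convex hull (indic_vec ` {B\<in>Bs. card (B \<inter> E1) \<le> k1})"
      unfolding y_def using x x0 by auto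
  qed
  moreover have "(\<Sum>x\<in>G. u x *\<^sub>R y x) = p"
  proof -
    have "(\<Sum>x\<in>G. u x *\<^sub>R y x) = (\<Sum>x\<in>G. u x *\<^sub>R fst x)"
      unfolding y_def using u(1) by (intro sum.cong) force+
    also have "\<dots> = fst q0" unfolding u(3)[symmetric] fst_sum by simp
    finally show ?thesis using fq0 by simp
  qed
  ultimately show ?thesis by simp
qed



lemma card_split: "card (B \<inter> E) + card (B \<inter> - E) = card (B::'n::finite set)"
proof -
  have "B = (B \<inter> E) \<union> (B \<inter> - E)" by auto
  then have "card B = card ((B \<inter> E) \<union> (B \<inter> - E))" by simp
  also have "\<dots> = card (B \<inter> E) + card (B \<inter> - E)" by (rule card_Un_disjoint) auto
  finally show ?thesis by simp
qed

lemma lower_matroid: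
  fixes Bs :: "'n::finite set set"
  assumes M: "matroid_bases UNIV Bs" and B0: "B0 \<in> Bs" and r: "k1 + k2 = card B0"
    and layer: "\<And>X0 Y0. m_indep Bs X0 \<Longrightarrow> X0 \<subseteq> E1 \<Longrightarrow> card X0 = k1 \<Longrightarrow>
               m_indep Bs Y0 \<Longrightarrow> Y0 \<subseteq> - E1 \<Longrightarrow> card Y0 = k2 \<Longrightarrow> X0 \<union> Y0 \<in> Bs"
    and ne: "\<exists>B\<in>Bs. card (B \<inter> E1) \<le> k1"
  shows "matroid_bases UNIV {B\<in>Bs. card (B \<inter> E1) \<le> k1}"
proof -
  have cB: "\<And>B. B \<in> Bs \<Longrightarrow> card B = card B0" using bases_card_eq[OF M _ B0] by blast
  have exch: "\<exists>y\<in>B2 - B1. insert y (B1 - {x}) \<in> {B\<in>Bs. card (B \<inter> E1) \<le> k1}"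
    if B1: "B1 \<in> Bs" "card (B1 \<inter> E1) \<le> k1" and B2: "B2 \<in> Bs" "card (B2 \<inter> E1) \<le> k1"
      and x: "x \<in> B1 - B2" for B1 B2 x
  proof (cases "x \<in> E1 \<or> card (B1 \<inter> E1) < k1")
    case True
    obtain y where y: "y \<in> B2 - B1" "insert y (B1 - {x}) \<in> Bs"
      using M B1 B2 x unfolding matroid_bases_def by blast
    have "insert y (B1 - {x}) \<inter> E1 \<subseteq> insert y ((B1 - {x}) \<inter> E1)" by auto
    then have "card (insert y (B1 - {x}) \<inter> E1) \<le> card (insert y ((B1 - {x}) \<inter> E1))"
      by (intro card_mono) auto
    also have "\<dots> \<le> Suc (card ((B1 - {x}) \<inter> E1))" by (simp add: card_insert_if)
    finally have c1: "card (insert y (B1 - {x}) \<inter> E1) \<le> Suc (card ((B1 - {x}) \<inter> E1))" .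
    have "card (insert y (B1 - {x}) \<inter> E1) \<le> k1"
    proof (cases "x \<in> E1")
      case True
      then have "(B1 - {x}) \<inter> E1 = (B1 \<inter> E1) - {x}" by auto
      moreover have "card ((B1 \<inter> E1) - {x}) = card (B1 \<inter> E1) - 1" using True x by simp
      moreover have "card (B1 \<inter> E1) > 0" using True x by (auto simp: card_gt_0_iff)
      ultimately show ?thesis using c1 B1(2) by simp
    next
      case False
      then have "card (B1 \<inter> E1) < k1" using \<open>x \<in> E1 \<or> card (B1 \<inter> E1) < k1\<close> by simp
      moreover have "card ((B1 - {x}) \<inter> E1) \<le> card (B1 \<inter> E1)" by (intro card_mono) auto
      ultimately show ?thesis using c1 by simp
    qed
    then show ?thesis using y by auto
  next
    case False
    then have xE: "x \<notin> E1" and cB1: "card (B1 \<inter> E1) = k1" using B1 by auto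
    define Y1 where "Y1 = B1 \<inter> - E1"
    define Y2 where "Y2 = B2 \<inter> - E1"
    have cY1: "card Y1 = k2" using card_split[of B1 E1] cB[OF B1(1)] cB1 r unfolding Y1_def by simp
    have cY2: "k2 \<le> card Y2" using card_split[of B2 E1] cB[OF B2(1)] B2(2) r unfolding Y2_def by simp
    have xY1: "x \<in> Y1" using x xE unfolding Y1_def by auto
    have iY1: "m_indep Bs (Y1 - {x})" using B1(1) unfolding Y1_def by (auto intro: indep_subset base_indep)
    have iY2: "m_indep Bs Y2" using B2(1) unfolding Y2_def by (auto intro: indep_subset base_indep)
    have "card (Y1 - {x}) < card Y2" using cY1 cY2 xY1
      by (metis card_Diff1_less finite order_less_le_trans)
    then obtain y where y: "y \<in> Y2 - (Y1 - {x})" "m_indep Bs (insert y (Y1 - {x}))"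
      using augment[OF M iY1 iY2] by blast
    have yB1: "y \<notin> B1" using y x unfolding Y1_def Y2_def by auto
    have "k2 > 0" using cY1 xY1 by (auto simp: card_gt_0_iff)
    then have c2: "card (insert y (Y1 - {x})) = k2" using yB1 cY1 xY1 y(1) by (simp add: card_insert_if)
    have iX1: "m_indep Bs (B1 \<inter> E1)" using B1(1) by (auto intro: indep_subset base_indep)
    have "(B1 \<inter> E1) \<union> insert y (Y1 - {x}) \<in> Bs"
      using layer[OF iX1 _ cB1 y(2) _ c2] y(1) unfolding Y1_def Y2_def by auto
    moreover have "(B1 \<inter> E1) \<union> insert y (Y1 - {x}) = insert y (B1 - {x})"
      using xE unfolding Y1_def by auto
    moreover have "insert y (B1 - {x}) \<inter> E1 = B1 \<inter> E1" using xE y(1) unfolding Y2_def by auto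
    ultimately show ?thesis using cB1 y(1) yB1 unfolding Y2_def by auto
  qed
  show ?thesis using M ne exch unfolding matroid_bases_def by auto
qed

lemma lev_hull_le:
  assumes "\<forall>B\<in>L. card (B \<inter> E) \<le> k" and "x \<in> convex hull (indic_vec ` L)"
  shows "indic_vec E \<bullet> x \<le> real k"
proof -
  have "convex hull (indic_vec ` L) \<subseteq> {x. indic_vec E \<bullet> x \<le> real k}"
    by (rule hull_minimal) (use assms(1) in \<open>auto simp: lev_indic convex_halfspace_le\<close>)
  then show ?thesis using assms(2) by auto
qed

lemma lev_hull_ge:
  assumes "\<forall>B\<in>L. k \<le> card (B \<inter> E)" and "x \<in> convex hull (indic_vec ` L)"
  shows "real k \<le> indic_vec E \<bullet> x"
proof -
  have "convex hull (indic_vec ` L) \<subseteq> {x. indic_vec E \<bullet> x \<ge> real k}"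
    by (rule hull_minimal) (use assms(1) in \<open>auto simp: lev_indic convex_halfspace_ge\<close>)
  then show ?thesis using assms(2) by auto
qed

lemma face_part:
  fixes La Lb :: "'n::finite set set"
  assumes a: "\<forall>B\<in>La. card (B \<inter> E) \<le> k" and b: "\<forall>B\<in>Lb. k \<le> card (B \<inter> E)"
    and c: "\<And>B. B \<in> La \<Longrightarrow> card (B \<inter> E) = k \<Longrightarrow> B \<in> Lb"
  shows "(convex hull (indic_vec ` La) \<inter> convex hull (indic_vec ` Lb)) face_of convex hull (indic_vec ` La)"
proof -
  define P where "P = convex hull (indic_vec ` La)"
  define F where "F = P \<inter> {x. indic_vec E \<bullet> x = real k}"
  have F: "F face_of P" unfolding F_def P_def
    by (rule face_of_Int_supporting_hyperplane_le) (use lev_hull_le[OF a] in auto)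
  have "F \<subseteq> convex hull (indic_vec ` Lb)"
  proof -
    obtain S' where S': "S' \<subseteq> indic_vec ` La" "F = convex hull S'"
    proof -
      have "compact (indic_vec ` La)" by (intro finite_imp_compact) simp
      then show ?thesis using face_of_convex_hull_subset[of "indic_vec ` La" F] F that unfolding P_def
        by blast
    qed
    have "S' \<subseteq> indic_vec ` Lb"
    proof
      fix s assume s: "s \<in> S'"
      then obtain B where B: "B \<in> La" "s = indic_vec B" using S' by auto
      have "s \<in> F" using s S' hull_inc by metis
      then have "real (card (B \<inter> E)) = real k" unfolding F_def using B by (simp add: lev_indic)
      then have "B \<in> Lb" using c B by simp
      then show "s \<in> indic_vec ` Lb" using B by auto
    qed
    then show ?thesis using S' hull_mono by metis
  qed
  moreover have "P \<inter> convex hull (indic_vec ` Lb) \<subseteq> F"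
    unfolding F_def P_def using lev_hull_le[OF a] lev_hull_ge[OF b] by (auto intro: antisym)
  ultimately have "P \<inter> convex hull (indic_vec ` Lb) = F" unfolding F_def by auto
  then show ?thesis using F unfolding P_def by simp
qed



theorem corollary2:
  fixes \<B> \<B>' :: "'n::finite set set" and E1 E2 :: "'n set"
  assumes "matroid_bases UNIV \<B>"
    and "good_partition UNIV \<B> E1 E2"
    and "is_relaxation UNIV \<B> \<B>'"
  shows "has_nontrivial_hyperplane_split \<B>'"
proof -
  note M = assms(1)
  obtain X where C: "m_circuit UNIV \<B> X" and H: "m_hyperplane UNIV \<B> X" and B'eq: "\<B>' = \<B> \<union> {X}"
    using assms(3) unfolding is_relaxation_def by blast
  define r1 where "r1 = m_rank \<B> E1"
  define r2 where "r2 = m_rank \<B> E2"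
  obtain a1 a2 where E12: "E1 \<union> E2 = UNIV" "E1 \<inter> E2 = {}"
    and a: "0 < a1" "a1 < r1" "0 < a2" "a2 < r2" "r1 + r2 = m_rank \<B> UNIV + a1 + a2"
    and P2: "\<And>X Y. restr_indep \<B> E1 X \<Longrightarrow> card X \<le> r1 - a1 \<Longrightarrow>
               restr_indep \<B> E2 Y \<Longrightarrow> card Y \<le> r2 - a2 \<Longrightarrow> m_indep \<B> (X \<union> Y)"
    using assms(2) unfolding good_partition_def r1_def r2_def by blast
  have E2: "E2 = - E1" using E12 by auto
  obtain B0 where B0: "B0 \<in> \<B>" using M unfolding matroid_bases_def by auto
  have rU: "m_rank \<B> UNIV = card B0" by (rule rank_UNIV[OF M B0])
  define k1 where "k1 = r1 - a1"
  define k2 where "k2 = r2 - a2"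
  have k: "k1 + k2 = card B0" "0 < k1" "0 < k2" using a rU unfolding k1_def k2_def by auto
  have r0: "0 < card B0" using k by simp
  have M': "matroid_bases UNIV \<B>'" unfolding B'eq by (rule relax_matroid[OF M B0 r0 C H])
  have B0': "B0 \<in> \<B>'" using B0 B'eq by auto
  have cB: "\<And>B. B \<in> \<B>' \<Longrightarrow> card B = card B0" using bases_card_eq[OF M' _ B0'] by blast
  have small: "\<And>I. m_indep \<B>' I \<Longrightarrow> card I < card B0 \<Longrightarrow> m_indep \<B> I"
    using relax_indep_small[OF M B0 r0 C H] B'eq by blast
  have layer1: "X0 \<union> Y0 \<in> \<B>'"
    if X0: "m_indep \<B>' X0" "X0 \<subseteq> E1" "card X0 = k1" and Y0: "m_indep \<B>' Y0" "Y0 \<subseteq> - E1" "card Y0 = k2"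
    for X0 Y0
  proof -
    have iX: "m_indep \<B> X0" using small[OF X0(1)] X0(3) k by simp
    have iY: "m_indep \<B> Y0" using small[OF Y0(1)] Y0(3) k by simp
    have "m_indep \<B> (X0 \<union> Y0)"
      using P2[of X0 Y0] iX iY X0 Y0 E2 unfolding restr_indep_def k1_def k2_def by auto
    moreover have "card (X0 \<union> Y0) = card B0" using X0 Y0 k by (subst card_Un_disjoint) auto
    ultimately have "X0 \<union> Y0 \<in> \<B>" using indep_card_base[OF M _ B0] by blast
    then show ?thesis using B'eq by auto
  qed
  have layer2: "X0 \<union> Y0 \<in> \<B>'"
    if X0: "m_indep \<B>' X0" "X0 \<subseteq> E2" "card X0 = k2" and Y0: "m_indep \<B>' Y0" "Y0 \<subseteq> - E2" "card Y0 = k1"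
    for X0 Y0
    using layer1[OF Y0(1) _ Y0(3) X0(1) _ X0(3)] X0(2) Y0(2) E2 by (simp add: Un_commute)
  have k': "k2 + k1 = card B0" using k by simp
  obtain I where I: "m_indep \<B> I" "I \<subseteq> E1" "card I = r1" using rank_attained[OF M] unfolding r1_def by blast
  obtain Dh where Dh: "Dh \<in> \<B>" "I \<subseteq> Dh" using extend_within[OF M I(1) _ B0] by blast
  have hiDh: "k1 < card (Dh \<inter> E1)"
  proof -
    have "card I \<le> card (Dh \<inter> E1)" using I Dh by (intro card_mono) auto
    then show ?thesis using I a unfolding k1_def by simp
  qed
  obtain J where J: "m_indep \<B> J" "J \<subseteq> E2" "card J = r2" using rank_attained[OF M] unfolding r2_def by blast
  obtain Dl where Dl: "Dl \<in> \<B>" "J \<subseteq> Dl" using extend_within[OF M J(1) _ B0] by blast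
  have hiDl: "k2 < card (Dl \<inter> E2)"
  proof -
    have "card J \<le> card (Dl \<inter> E2)" using J Dl by (intro card_mono) auto
    then show ?thesis using J a unfolding k2_def by simp
  qed
  have Dh': "Dh \<in> \<B>'" and Dl': "Dl \<in> \<B>'" using Dh Dl B'eq by auto
  have split12: "\<And>B. B \<in> \<B>' \<Longrightarrow> card (B \<inter> E1) + card (B \<inter> E2) = card B0"
    using card_split cB E2 by metis
  define L1 where "L1 = {B\<in>\<B>'. card (B \<inter> E1) \<le> k1}"
  define L2 where "L2 = {B\<in>\<B>'. card (B \<inter> E2) \<le> k2}"
  have loDl: "card (Dl \<inter> E1) \<le> k1" using split12[OF Dl'] hiDl k by simp
  have loDh: "card (Dh \<inter> E2) \<le> k2" using split12[OF Dh'] hiDh k by simp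
  have mL1: "matroid_bases UNIV L1" unfolding L1_def
    by (rule lower_matroid[OF M' B0' k(1) layer1]) (use Dl' loDl in auto)
  have mL2: "matroid_bases UNIV L2" unfolding L2_def
    by (rule lower_matroid[OF M' B0' k' layer2]) (use Dh' loDh in auto)
  define P where "P = convex hull (indic_vec ` \<B>')"
  define P1 where "P1 = convex hull (indic_vec ` L1)"
  define P2' where "P2' = convex hull (indic_vec ` L2)"
  have sumlev: "indic_vec E1 \<bullet> x + indic_vec E2 \<bullet> x = real (card B0)" if "x \<in> P" for x
  proof -
    have "P \<subseteq> {x. (indic_vec E1 + indic_vec E2) \<bullet> x = real (card B0)}"
      unfolding P_def
    proof (rule hull_minimal)
      show "indic_vec ` \<B>' \<subseteq> {x. (indic_vec E1 + indic_vec E2) \<bullet> x = real (card B0)}"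
        using split12 by (auto simp: inner_add_left lev_indic simp flip: of_nat_add)
    qed (rule convex_hyperplane)
    then show ?thesis using that by (auto simp: inner_add_left)
  qed
  have union: "P = P1 \<union> P2'"
  proof
    show "P1 \<union> P2' \<subseteq> P" unfolding P_def P1_def P2'_def L1_def L2_def
      by (intro Un_least hull_mono image_mono) auto
  next
    show "P \<subseteq> P1 \<union> P2'"
    proof
      fix p assume p: "p \<in> P"
      show "p \<in> P1 \<union> P2'"
      proof (cases "indic_vec E1 \<bullet> p \<le> real k1")
        case True
        then have "p \<in> P1" unfolding P1_def L1_def
          using core_split[OF M' B0' k(1) layer1, where p=p] p unfolding P_def by blast
        then show ?thesis by simp
      next
        case False
        then have "indic_vec E2 \<bullet> p \<le> real k2" using sumlev[OF p] k by simp
        then have "p \<in> P2'" unfolding P2'_def L2_def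
          using core_split[OF M' B0' k' layer2, where p=p] p unfolding P_def by blast
        then show ?thesis by simp
      qed
    qed
  qed
  have f1: "(P1 \<inter> P2') face_of P1" unfolding P1_def P2'_def
  proof (rule face_part[where E = E1 and k = k1])
    show "\<forall>B\<in>L1. card (B \<inter> E1) \<le> k1" unfolding L1_def by auto
    show "\<forall>B\<in>L2. k1 \<le> card (B \<inter> E1)" unfolding L2_def using split12 k by fastforce
    show "\<And>B. B \<in> L1 \<Longrightarrow> card (B \<inter> E1) = k1 \<Longrightarrow> B \<in> L2" unfolding L1_def L2_def using split12 k by fastforce
  qed
  have f2: "(P2' \<inter> P1) face_of P2'" unfolding P1_def P2'_def
  proof (rule face_part[where E = E2 and k = k2])
    show "\<forall>B\<in>L2. card (B \<inter> E2) \<le> k2" unfolding L2_def by auto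
    show "\<forall>B\<in>L1. k2 \<le> card (B \<inter> E2)" unfolding L1_def using split12 k by fastforce
    show "\<And>B. B \<in> L2 \<Longrightarrow> card (B \<inter> E2) = k2 \<Longrightarrow> B \<in> L1" unfolding L1_def L2_def using split12 k by fastforce
  qed
  have n1: "P1 \<noteq> P"
  proof
    assume "P1 = P"
    moreover have "indic_vec Dh \<in> P" unfolding P_def using Dh' by (auto intro: hull_inc)
    ultimately have "indic_vec E1 \<bullet> indic_vec Dh \<le> real k1"
      unfolding P1_def by (intro lev_hull_le[of L1]) (auto simp: L1_def)
    then show False using hiDh by (simp add: lev_indic)
  qed
  have n2: "P2' \<noteq> P"
  proof
    assume "P2' = P"
    moreover have "indic_vec Dl \<in> P" unfolding P_def using Dl' by (auto intro: hull_inc)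
    ultimately have "indic_vec E2 \<bullet> indic_vec Dl \<le> real k2"
      unfolding P2'_def by (intro lev_hull_le[of L2]) (auto simp: L2_def)
    then show False using hiDl by (simp add: lev_indic)
  qed
  show ?thesis
    unfolding has_nontrivial_hyperplane_split_def hyperplane_split_def base_polytope_def
    using mL1 mL2 union f1 f2 n1 n2 unfolding P_def P1_def P2'_def
    by (intro exI[of _ L1] exI[of _ L2]) (simp add: Int_commute)
qed

end
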